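(* Let $X$ be an infinite zero-dimensional compact Hausdorff space. Then $X$ is h-homogeneous if and only if $X$ is partition-homogeneous.
   Context: $X$ is h-homogeneous if every nonempty clopen subset of $X$ is homeomorphic to $X$. $X$ is partition-homogeneous if for any two finite ordered partitions of $X$ into the same number $m$ of (nonempty) clopen sets, $(A_1,\dots,A_m)$ and $(B_1,\dots,B_m)$, there is a homeomorphism $h$ of $X$ with $hA_i=B_i$ for $i=1,\dots,m$. *)

theory Defs
  imports "HOL-Analysis.Analysis"
begin

definition clopen_in :: "'a topology \<Rightarrow> 'a set \<Rightarrow> bool" where
  "clopen_in X S \<longleftrightarrow> closedin X S \<and> openin X S"

definition h_homogeneous :: "'a topology \<Rightarrow> bool" where
  "h_homogeneous X \<longleftrightarrow>
     (\<forall>S. clopen_in X S \<and> S \<noteq> {} \<longrightarrow> (subtopology X S) homeomorphic_space X)"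

definition clopen_partition :: "'a topology \<Rightarrow> nat \<Rightarrow> (nat \<Rightarrow> 'a set) \<Rightarrow> bool" where
  "clopen_partition X m A \<longleftrightarrow>
     (\<forall>i<m. clopen_in X (A i) \<and> A i \<noteq> {}) \<and>
     (\<forall>i<m. \<forall>j<m. i \<noteq> j \<longrightarrow> A i \<inter> A j = {}) \<and>
     (\<Union>i<m. A i) = topspace X"

definition partition_homogeneous :: "'a topology \<Rightarrow> bool" where
  "partition_homogeneous X \<longleftrightarrow>
     (\<forall>m A B. clopen_partition X m A \<and> clopen_partition X m B \<longrightarrow>
        (\<exists>h. homeomorphic_map X X h \<and> (\<forall>i<m. h ` A i = B i)))"

end

theory Submission imports Defs begin

lemma glue:
  assumes opA: "\<And>i. i \<in> I \<Longrightarrow> openin X (A i)"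
    and opB: "\<And>i. i \<in> I \<Longrightarrow> openin Y (B i)"
    and djA: "\<And>i j. i \<in> I \<Longrightarrow> j \<in> I \<Longrightarrow> i \<noteq> j \<Longrightarrow> A i \<inter> A j = {}"
    and djB: "\<And>i j. i \<in> I \<Longrightarrow> j \<in> I \<Longrightarrow> i \<noteq> j \<Longrightarrow> B i \<inter> B j = {}"
    and cA: "(\<Union>i\<in>I. A i) = topspace X"
    and cB: "(\<Union>i\<in>I. B i) = topspace Y"
    and hs: "\<And>i. i \<in> I \<Longrightarrow> subtopology X (A i) homeomorphic_space subtopology Y (B i)"
  shows "\<exists>h. homeomorphic_map X Y h \<and> (\<forall>i\<in>I. h ` A i = B i)"
proof -
  have "\<forall>i\<in>I. \<exists>f g. homeomorphic_maps (subtopology X (A i)) (subtopology Y (B i)) f g"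
    using hs unfolding homeomorphic_space_def by blast
  then obtain f g where fg: "\<And>i. i \<in> I \<Longrightarrow> homeomorphic_maps (subtopology X (A i)) (subtopology Y (B i)) (f i) (g i)"
    by metis
  have Asub: "\<And>i. i \<in> I \<Longrightarrow> A i \<subseteq> topspace X" using cA by blast
  have Bsub: "\<And>i. i \<in> I \<Longrightarrow> B i \<subseteq> topspace Y" using cB by blast
  have tA: "\<And>i. i \<in> I \<Longrightarrow> topspace (subtopology X (A i)) = A i" using Asub by auto
  have tB: "\<And>i. i \<in> I \<Longrightarrow> topspace (subtopology Y (B i)) = B i" using Bsub by auto
  have cf: "\<And>i. i \<in> I \<Longrightarrow> continuous_map (subtopology X (A i)) Y (f i)"
    using fg unfolding homeomorphic_maps_def by (meson continuous_map_from_subtopology_mono continuous_map_in_subtopology subset_refl)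
  have cg: "\<And>i. i \<in> I \<Longrightarrow> continuous_map (subtopology Y (B i)) X (g i)"
    using fg unfolding homeomorphic_maps_def by (meson continuous_map_in_subtopology)
  obtain h where h: "continuous_map X Y h" "\<And>x i. \<lbrakk>i \<in> I; x \<in> topspace X \<inter> A i\<rbrakk> \<Longrightarrow> h x = f i x"
    using pasting_lemma_exists[where X=X and I=I and T=A and Y=Y and f=f] cA opA cf djA by blast
  obtain k where k: "continuous_map Y X k" "\<And>x i. \<lbrakk>i \<in> I; x \<in> topspace Y \<inter> B i\<rbrakk> \<Longrightarrow> k x = g i x"
    using pasting_lemma_exists[where X=Y and I=I and T=B and Y=X and f=g] cB opB cg djB by blast
  have fim: "\<And>i. i \<in> I \<Longrightarrow> f i ` A i = B i"
    using fg tA tB homeomorphic_maps_map homeomorphic_imp_surjective_map by metis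
  have gim: "\<And>i. i \<in> I \<Longrightarrow> g i ` B i = A i"
    using fg tA tB homeomorphic_maps_map homeomorphic_imp_surjective_map by metis
  have gf: "\<And>i x. i \<in> I \<Longrightarrow> x \<in> A i \<Longrightarrow> g i (f i x) = x"
    using fg tA unfolding homeomorphic_maps_def by metis
  have fgi: "\<And>i y. i \<in> I \<Longrightarrow> y \<in> B i \<Longrightarrow> f i (g i y) = y"
    using fg tB unfolding homeomorphic_maps_def by metis
  have "homeomorphic_maps X Y h k"
    unfolding homeomorphic_maps_def
  proof (intro conjI ballI h(1) k(1))
    fix x assume x: "x \<in> topspace X"
    then obtain i where i: "i \<in> I" "x \<in> A i" using cA by blast
    have "h x = f i x" using h(2) i x by blast
    moreover have "f i x \<in> B i" using fim i by blast
    moreover have "f i x \<in> topspace Y" using Bsub i \<open>f i x \<in> B i\<close> by blast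
    ultimately have "k (h x) = g i (f i x)" using k(2)[of i "f i x"] i by simp
    then show "k (h x) = x" using gf i by simp
  next
    fix y assume y: "y \<in> topspace Y"
    then obtain i where i: "i \<in> I" "y \<in> B i" using cB by blast
    have "k y = g i y" using k(2) i y by blast
    moreover have "g i y \<in> A i" using gim i by blast
    moreover have "g i y \<in> topspace X" using Asub i \<open>g i y \<in> A i\<close> by blast
    ultimately have "h (k y) = f i (g i y)" using h(2)[of i "g i y"] i by simp
    then show "h (k y) = y" using fgi i by simp
  qed
  moreover have "\<forall>i\<in>I. h ` A i = B i"
  proof
    fix i assume i: "i \<in> I"
    have "h ` A i = f i ` A i" using h(2) i Asub by (intro image_cong) auto
    then show "h ` A i = B i" using fim i by simp
  qed
  ultimately show ?thesis using homeomorphic_map_maps by blast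
qed


lemma h_imp_p:
  assumes "h_homogeneous X"
  shows "partition_homogeneous X"
  unfolding partition_homogeneous_def
proof (intro allI impI)
  fix m A B assume ab: "clopen_partition X m A \<and> clopen_partition X m B"
  have hs: "subtopology X (A i) homeomorphic_space subtopology X (B i)" if "i \<in> {..<m}" for i
  proof -
    have "subtopology X (A i) homeomorphic_space X" "subtopology X (B i) homeomorphic_space X"
      using assms ab that unfolding h_homogeneous_def clopen_partition_def by auto
    then show ?thesis by (meson homeomorphic_space_sym homeomorphic_space_trans)
  qed
  have "\<exists>h. homeomorphic_map X X h \<and> (\<forall>i\<in>{..<m}. h ` A i = B i)"
    apply (rule glue[OF _ _ _ _ _ _ hs])
    using ab unfolding clopen_partition_def clopen_in_def by auto
  then show "\<exists>h. homeomorphic_map X X h \<and> (\<forall>i<m. h ` A i = B i)" by auto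
qed

lemma sep_clopen:
  assumes "X dim_le 0" "Hausdorff_space X" "p \<in> topspace X" "q \<in> topspace X" "p \<noteq> q"
  shows "\<exists>U. clopen_in X U \<and> p \<in> U \<and> q \<notin> U"
proof -
  have "t1_space X" using assms(2) by (rule Hausdorff_imp_t1_space)
  then have "\<exists>W. openin X W \<and> p \<in> W \<and> q \<notin> W"
    using assms(3,4,5) unfolding t1_space_def by simp
  then obtain W where W: "openin X W" "p \<in> W" "q \<notin> W" by blast
  have nb: "neighbourhood_base_of (\<lambda>U. closedin X U \<and> openin X U) X"
    by (rule dimension_le_0_neighbourhood_base_of_clopen[THEN iffD1, OF assms(1)])
  have "\<exists>U V. openin X U \<and> (closedin X V \<and> openin X V) \<and> p \<in> U \<and> U \<subseteq> V \<and> V \<subseteq> W"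
    using nb W(1,2) unfolding neighbourhood_base_of by simp
  then obtain U V where "closedin X V \<and> openin X V" "p \<in> U" "U \<subseteq> V" "V \<subseteq> W" by blast
  then have "clopen_in X V \<and> p \<in> V \<and> q \<notin> V" using W(3) unfolding clopen_in_def by blast
  then show ?thesis by blast
qed

lemma two_cases: "(i::nat) < 2 \<Longrightarrow> i = 0 \<or> i = 1" by linarith

lemma part2:
  assumes "clopen_in X P" "clopen_in X Q" "P \<noteq> {}" "Q \<noteq> {}" "P \<inter> Q = {}" "P \<union> Q = topspace X"
  shows "clopen_partition X 2 (\<lambda>i. if i = 0 then P else Q)"
  unfolding clopen_partition_def
proof (intro conjI allI impI)
  fix i :: nat assume "i < 2"
  then have "i = 0 \<or> i = 1" by (rule two_cases)
  then show "clopen_in X (if i = 0 then P else Q)" "(if i = 0 then P else Q) \<noteq> {}"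
    using assms by auto
next
  fix i j :: nat assume "i < 2" "j < 2" "i \<noteq> j"
  then have "(i = 0 \<and> j = 1) \<or> (i = 1 \<and> j = 0)" using two_cases by blast
  then show "(if i = 0 then P else Q) \<inter> (if j = 0 then P else Q) = {}"
    using assms by auto
next
  have "{..<2::nat} = {0,1}" by auto
  then show "(\<Union>i<(2::nat). if i = 0 then P else Q) = topspace X" using assms by (simp add: Un_commute)
qed

lemma p_imp_h:
  assumes inf: "infinite (topspace X)" and d0: "X dim_le 0" and H: "Hausdorff_space X"
    and ph: "partition_homogeneous X"
  shows "h_homogeneous X"
  unfolding h_homogeneous_def
proof (intro allI impI)
  fix S assume S: "clopen_in X S \<and> S \<noteq> {}"
  show "subtopology X S homeomorphic_space X"
  proof (cases "S = topspace X")
    case True then show ?thesis by simp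
  next
    case False
    define T where "T = topspace X - S"
    have Ssub: "S \<subseteq> topspace X" using S unfolding clopen_in_def by (simp add: closedin_subset)
    have Tne: "T \<noteq> {}" using False Ssub T_def by blast
    have cS: "clopen_in X S" using S by blast
    have cT: "clopen_in X T" using cS unfolding clopen_in_def T_def
      by (simp add: closedin_diff openin_diff)
    have "\<exists>p q. p \<in> S \<and> q \<in> S \<and> p \<noteq> q"
    proof (rule ccontr)
      assume "\<not> ?thesis"
      then obtain p where Sp: "S = {p}" using S by blast
      define A where "A = (\<lambda>i::nat. if i = 0 then S else T)"
      define B where "B = (\<lambda>i::nat. if i = 0 then T else S)"
      have e1: "S \<inter> T = {}" "S \<union> T = topspace X" "T \<union> S = topspace X" "T \<inter> S = {}"
        using Ssub T_def by auto
      have "clopen_partition X 2 A" "clopen_partition X 2 B"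
        unfolding A_def B_def using part2[OF cS cT _ Tne e1(1) e1(2)] part2[OF cT cS Tne _ e1(4) e1(3)] S by auto
      then have "\<exists>h. homeomorphic_map X X h \<and> (\<forall>i<2. h ` A i = B i)"
        using ph unfolding partition_homogeneous_def by (metis (no_types))
      then obtain h where "\<forall>i<2::nat. h ` A i = B i" by blast
      then have "h ` A 0 = B 0" by simp
      then have "T = {h p}" using Sp A_def B_def by simp
      then have "topspace X = {p, h p}" using Ssub T_def Sp by blast
      then show False using inf by simp
    qed
    then obtain p q where pq: "p \<in> S" "q \<in> S" "p \<noteq> q" by blast
    obtain U where U: "clopen_in X U" "p \<in> U" "q \<notin> U"
      using sep_clopen[OF d0 H, of p q] pq Ssub by blast
    define S1 where "S1 = S \<inter> U"
    define S2 where "S2 = S - U"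
    have cS1: "clopen_in X S1" using cS U unfolding clopen_in_def S1_def by auto
    have cS2: "clopen_in X S2" using cS U unfolding clopen_in_def S2_def
      by (simp add: closedin_diff openin_diff)
    have ne1: "S1 \<noteq> {}" and ne2: "S2 \<noteq> {}" using pq U S1_def S2_def by auto
    define A where "A = (\<lambda>i::nat. if i = 0 then S2 \<union> T else S1)"
    define B where "B = (\<lambda>i::nat. if i = 0 then S2 else S1 \<union> T)"
    have cU: "clopen_in X (S2 \<union> T)" "clopen_in X (S1 \<union> T)"
      using cS1 cS2 cT unfolding clopen_in_def by auto
    have e1: "(S2 \<union> T) \<inter> S1 = {}" "(S2 \<union> T) \<union> S1 = topspace X"
      "S2 \<inter> (S1 \<union> T) = {}" "S2 \<union> (S1 \<union> T) = topspace X"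
      using Ssub T_def S1_def S2_def by auto
    have ne3: "S2 \<union> T \<noteq> {}" "S1 \<union> T \<noteq> {}" using ne1 ne2 by auto
    have "clopen_partition X 2 A" "clopen_partition X 2 B"
      unfolding A_def B_def using part2[OF cU(1) cS1 ne3(1) ne1 e1(1) e1(2)] part2[OF cS2 cU(2) ne2 ne3(2) e1(3) e1(4)] by auto
    then have "\<exists>h. homeomorphic_map X X h \<and> (\<forall>i<2. h ` A i = B i)"
      using ph unfolding partition_homogeneous_def by (metis (no_types))
    then obtain h where h0: "homeomorphic_map X X h" "\<forall>i<2::nat. h ` A i = B i" by blast
    then have h: "homeomorphic_map X X h" "h ` A 0 = B 0" by simp_all
    have T2sub: "S2 \<union> T \<subseteq> topspace X" using Ssub T_def S2_def by auto
    have S2sub: "S2 \<subseteq> topspace X" using Ssub S2_def by auto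
    have "homeomorphic_map (subtopology X (S2 \<union> T)) (subtopology X S2) h"
      apply (rule homeomorphic_map_subtopologies[OF h(1)])
      using h(2) A_def B_def T2sub S2sub by (simp add: Int_absorb1)
    then obtain h' where "homeomorphic_maps (subtopology X (S2 \<union> T)) (subtopology X S2) h h'"
      by (auto simp: homeomorphic_map_maps)
    then have hs2: "subtopology X (S2 \<union> T) homeomorphic_space subtopology X S2"
      unfolding homeomorphic_space_def by blast
    define A' where "A' = (\<lambda>i::nat. if i = 0 then S1 else S2 \<union> T)"
    define B' where "B' = (\<lambda>i::nat. if i = 0 then S1 else S2)"
    have sub1: "S1 \<subseteq> S" "S2 \<subseteq> S" using S1_def S2_def by auto
    have "\<exists>g. homeomorphic_map X (subtopology X S) g \<and> (\<forall>i\<in>{0,1::nat}. g ` A' i = B' i)"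
    proof (rule glue)
      have s1: "subtopology (subtopology X S) S1 = subtopology X S1"
        using sub1(1) by (simp add: subtopology_subtopology Int_absorb1)
      have s2: "subtopology (subtopology X S) S2 = subtopology X S2"
        using sub1(2) by (simp add: subtopology_subtopology Int_absorb1)
      fix i :: nat assume "i \<in> {0,1}"
      then have "i = 0 \<or> i = 1" by simp
      then show "subtopology X (A' i) homeomorphic_space subtopology (subtopology X S) (B' i)"
      proof
        assume "i = 0" then show ?thesis unfolding A'_def B'_def using s1 by simp
      next
        assume "i = 1" then show ?thesis unfolding A'_def B'_def using s2 hs2 by simp
      qed
    next
      fix i :: nat assume "i \<in> {0,1}"
      then have "i = 0 \<or> i = 1" by simp
      then show "openin X (A' i)" using cS1 cU unfolding A'_def clopen_in_def by fastforce
    next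
      have o1: "openin (subtopology X S) S1" "openin (subtopology X S) S2"
        using cS cS1 cS2 sub1 unfolding clopen_in_def by (simp_all add: openin_open_subtopology)
      fix i :: nat assume "i \<in> {0,1}"
      then have "i = 0 \<or> i = 1" by simp
      then show "openin (subtopology X S) (B' i)" using o1 unfolding B'_def by fastforce
    next
      have e: "S1 \<inter> (S2 \<union> T) = {}" unfolding T_def S1_def S2_def by blast
      fix i j :: nat assume "i \<in> {0,1}" "j \<in> {0,1}" "i \<noteq> j"
      then have "(i = 0 \<and> j = 1) \<or> (i = 1 \<and> j = 0)" by auto
      then show "A' i \<inter> A' j = {}"
      proof
        assume "i = 0 \<and> j = 1" then show ?thesis unfolding A'_def using e by simp
      next
        assume "i = 1 \<and> j = 0" then show ?thesis unfolding A'_def using e by (simp add: Int_commute)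
      qed
    next
      have e: "S1 \<inter> S2 = {}" unfolding S1_def S2_def by blast
      fix i j :: nat assume "i \<in> {0,1}" "j \<in> {0,1}" "i \<noteq> j"
      then have "(i = 0 \<and> j = 1) \<or> (i = 1 \<and> j = 0)" by auto
      then show "B' i \<inter> B' j = {}"
      proof
        assume "i = 0 \<and> j = 1" then show ?thesis unfolding B'_def using e by simp
      next
        assume "i = 1 \<and> j = 0" then show ?thesis unfolding B'_def using e by (simp add: Int_commute)
      qed
    next
      have e: "S1 \<union> (S2 \<union> T) = topspace X" using Ssub unfolding T_def S1_def S2_def by blast
      show "(\<Union>i\<in>{0,1::nat}. A' i) = topspace X" unfolding A'_def using e by (simp add: Un_ac)
    next
      have e: "S1 \<union> S2 = topspace (subtopology X S)" using Ssub unfolding S1_def S2_def by (simp add: Int_absorb1, blast)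
      show "(\<Union>i\<in>{0,1::nat}. B' i) = topspace (subtopology X S)" unfolding B'_def using e by (simp add: Un_ac)
    qed
    then obtain g where g: "homeomorphic_map X (subtopology X S) g" by (elim exE conjE)
    have "\<exists>g'. homeomorphic_maps X (subtopology X S) g g'"
      using g by (simp only: homeomorphic_map_maps)
    then have "X homeomorphic_space subtopology X S"
      unfolding homeomorphic_space_def by (rule exI[where x=g])
    then show ?thesis by (rule homeomorphic_space_sym[THEN iffD1])
  qed
qed

theorem proposition2p2:
  fixes X :: "'a topology"
  assumes "infinite (topspace X)"
    and "X dim_le 0"
    and "compact_space X"
    and "Hausdorff_space X"
  shows "h_homogeneous X \<longleftrightarrow> partition_homogeneous X"
proof
  assume "h_homogeneous X"
  then show "partition_homogeneous X" by (rule h_imp_p)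
next
  assume "partition_homogeneous X"
  then show "h_homogeneous X" by (rule p_imp_h[OF assms(1,2,4)])
qed

end
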